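(* The space $(\mathbb{Q}_Q(\mathbb{R}^n),\mathcal{G})$ is positively curved in the sense of Alexandrov: for all $A,B,C\in\mathbb{Q}_Q(\mathbb{R}^n)$, every geodesic $\gamma$ from $A$ to $B$ and every $t\in[0,1]$, $$\mathcal{G}^2(\gamma(t),C)\ge (1-t)\mathcal{G}^2(A,C)+t\,\mathcal{G}^2(B,C)-t(1-t)\mathcal{G}^2(A,B).$$
   Context: $\mathbb{Q}_Q(\mathbb{R}^n)$ denotes the set of unordered $Q$-tuples of points of $\mathbb{R}^n$, written $\sum_{i=1}^Q[[a_i]]$; two such sums are equal iff the tuples agree up to a permutation. The metric is $\mathcal{G}\big(\sum_i[[a_i]],\sum_i[[b_i]]\big)=\min_{\sigma}\big(\sum_{i=1}^Q|a_i-b_{\sigma(i)}|^2\big)^{1/2}$ over permutations $\sigma$ of $\{1,\dots,Q\}$. A geodesic from $A$ to $B$ is a curve $\gamma:[0,1]\to\mathbb{Q}_Q(\mathbb{R}^n)$ with $\gamma(0)=A$, $\gamma(1)=B$ and $\mathcal{G}(\gamma(s),\gamma(t))=|t-s|\,\mathcal{G}(A,B)$ for all $s,t\in[0,1]$. *)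

theory Defs
  imports "HOL-Analysis.Analysis" "HOL-Library.Multiset"
begin

text \<open>Unordered Q-tuples of points of R^n are multisets of size Q.\<close>
definition Qpoints :: "nat \<Rightarrow> (real^'n) multiset set" where
  "Qpoints Q = {T. size T = Q}"

definition Gdist :: "(real^'n) multiset \<Rightarrow> (real^'n) multiset \<Rightarrow> real" where
  "Gdist A B = (let a = SOME a. mset a = A; b = SOME b. mset b = B; Q = length a in
     Min ((\<lambda>\<sigma>. sqrt (\<Sum>i<Q. (norm (a ! i - b ! \<sigma> i))\<^sup>2)) ` {\<sigma>. \<sigma> permutes {..<Q}}))"

definition is_geodesic :: "nat \<Rightarrow> (real \<Rightarrow> (real^'n) multiset) \<Rightarrow> (real^'n) multiset
    \<Rightarrow> (real^'n) multiset \<Rightarrow> bool" where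
  "is_geodesic Q \<gamma> A B \<longleftrightarrow> (\<forall>t\<in>{0..1}. \<gamma> t \<in> Qpoints Q) \<and> \<gamma> 0 = A \<and> \<gamma> 1 = B \<and>
     (\<forall>s\<in>{0..1}. \<forall>t\<in>{0..1}. Gdist (\<gamma> s) (\<gamma> t) = \<bar>t - s\<bar> * Gdist A B)"

end

theory Submission
  imports Defs
begin

lemma pl_sum:
  fixes a b :: "(real^'n) list"
  assumes "length a = Q" "length b = Q" "\<tau> permutes {..<Q}" "\<sigma> permutes {..<Q}"
  shows "(\<Sum>i<Q. (norm (permute_list \<tau> a ! i - permute_list (\<sigma> \<circ> \<tau>) b ! i))\<^sup>2)
       = (\<Sum>j<Q. (norm (a ! j - b ! \<sigma> j))\<^sup>2)"
proof -
  have "(\<Sum>i<Q. (norm (permute_list \<tau> a ! i - permute_list (\<sigma> \<circ> \<tau>) b ! i))\<^sup>2)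
      = (\<Sum>i<Q. (\<lambda>j. (norm (a ! j - b ! \<sigma> j))\<^sup>2) (\<tau> i))"
    using assms by (intro sum.cong) (auto simp: permute_list_nth permutes_compose)
  also have "\<dots> = (\<Sum>j<Q. (norm (a ! j - b ! \<sigma> j))\<^sup>2)"
    by (rule sum.reindex_bij_betw[OF permutes_imp_bij[OF assms(3)]])
  finally show ?thesis .
qed

lemma Gdist_unfold:
  assumes "size A = Q" "size B = Q"
  obtains a b where "mset a = A" "mset b = B" "length a = Q" "length b = Q"
    "Gdist A B = Min ((\<lambda>\<sigma>. sqrt (\<Sum>i<Q. (norm (a ! i - b ! \<sigma> i))\<^sup>2)) ` {\<sigma>. \<sigma> permutes {..<Q}})"
proof -
  define a where "a = (SOME a. mset a = A)"
  define b where "b = (SOME b. mset b = B)"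
  have ma: "mset a = A" unfolding a_def by (rule someI_ex) (rule ex_mset)
  have mb: "mset b = B" unfolding b_def by (rule someI_ex) (rule ex_mset)
  have la: "length a = Q" using ma assms by (metis size_mset)
  have lb: "length b = Q" using mb assms by (metis size_mset)
  show ?thesis
    apply (rule that[OF ma mb la lb])
    unfolding Gdist_def Let_def a_def[symmetric] b_def[symmetric] la by simp
qed

lemma Gdist_attain:
  assumes "size A = Q" "size B = Q"
  obtains a b \<sigma> where "mset a = A" "mset b = B" "length a = Q" "length b = Q" "\<sigma> permutes {..<Q}"
    "Gdist A B = sqrt (\<Sum>i<Q. (norm (a ! i - b ! \<sigma> i))\<^sup>2)"
    "\<And>\<tau>. \<tau> permutes {..<Q} \<Longrightarrow> sqrt (\<Sum>i<Q. (norm (a ! i - b ! \<tau> i))\<^sup>2) \<ge> Gdist A B"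
proof -
  obtain a b where ab: "mset a = A" "mset b = B" "length a = Q" "length b = Q"
    "Gdist A B = Min ((\<lambda>\<sigma>. sqrt (\<Sum>i<Q. (norm (a ! i - b ! \<sigma> i))\<^sup>2)) ` {\<sigma>. \<sigma> permutes {..<Q}})"
    using Gdist_unfold[OF assms] by blast
  let ?S = "(\<lambda>\<sigma>. sqrt (\<Sum>i<Q. (norm (a ! i - b ! \<sigma> i))\<^sup>2)) ` {\<sigma>. \<sigma> permutes {..<Q}}"
  have fin: "finite ?S" by (intro finite_imageI) (simp add: finite_permutations)
  have ne: "?S \<noteq> {}" using permutes_id by blast
  have "Min ?S \<in> ?S" using Min_in[OF fin ne] .
  then obtain \<sigma> where s: "\<sigma> permutes {..<Q}" "Min ?S = sqrt (\<Sum>i<Q. (norm (a ! i - b ! \<sigma> i))\<^sup>2)" by auto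
  show ?thesis
    apply (rule that[OF ab(1-4) s(1)])
    using s ab(5) apply simp
    using ab(5) Min_le[OF fin] by auto
qed

lemma Gdist_left:
  assumes "size A = Q" "size B = Q" "mset x = A"
  shows "\<exists>y. mset y = B \<and> Gdist A B = sqrt (\<Sum>i<Q. (norm (x ! i - y ! i))\<^sup>2)"
proof -
  obtain a b \<sigma> where ab: "mset a = A" "mset b = B" "length a = Q" "length b = Q" "\<sigma> permutes {..<Q}"
    "Gdist A B = sqrt (\<Sum>i<Q. (norm (a ! i - b ! \<sigma> i))\<^sup>2)"
    "\<And>\<tau>. \<tau> permutes {..<Q} \<Longrightarrow> sqrt (\<Sum>i<Q. (norm (a ! i - b ! \<tau> i))\<^sup>2) \<ge> Gdist A B"
    using Gdist_attain[OF assms(1,2)] by blast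
  have "mset x = mset a" using assms(3) ab by simp
  then obtain \<pi> where pi: "\<pi> permutes {..<length a}" "permute_list \<pi> a = x"
    by (rule mset_eq_permutation)
  then have pi: "\<pi> permutes {..<Q}" "permute_list \<pi> a = x" using ab by auto
  show ?thesis
    apply (rule exI[of _ "permute_list (\<sigma> \<circ> \<pi>) b"])
    using pl_sum[OF ab(3,4) pi(1) ab(5)] pi ab(1-6) permutes_compose[OF pi(1) ab(5)]
    by (simp add: mset_permute_list)
qed

lemma Gdist_right:
  assumes "size A = Q" "size B = Q" "mset y = B"
  shows "\<exists>x. mset x = A \<and> Gdist A B = sqrt (\<Sum>i<Q. (norm (x ! i - y ! i))\<^sup>2)"
proof -
  obtain a b \<sigma> where ab: "mset a = A" "mset b = B" "length a = Q" "length b = Q" "\<sigma> permutes {..<Q}"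
    "Gdist A B = sqrt (\<Sum>i<Q. (norm (a ! i - b ! \<sigma> i))\<^sup>2)"
    "\<And>\<tau>. \<tau> permutes {..<Q} \<Longrightarrow> sqrt (\<Sum>i<Q. (norm (a ! i - b ! \<tau> i))\<^sup>2) \<ge> Gdist A B"
    using Gdist_attain[OF assms(1,2)] by blast
  have "mset y = mset b" using assms(3) ab by simp
  then obtain \<rho> where r: "\<rho> permutes {..<length b}" "permute_list \<rho> b = y"
    by (rule mset_eq_permutation)
  then have r: "\<rho> permutes {..<Q}" "permute_list \<rho> b = y" using ab by auto
  have t: "inv \<sigma> \<circ> \<rho> permutes {..<Q}" using r ab(5) by (simp add: permutes_compose permutes_inv)
  have e: "\<sigma> \<circ> (inv \<sigma> \<circ> \<rho>) = \<rho>" using ab(5) by (simp add: o_assoc permutes_inv_o)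
  show ?thesis
    apply (rule exI[of _ "permute_list (inv \<sigma> \<circ> \<rho>) a"])
    using pl_sum[OF ab(3,4) t ab(5)] r ab(1-6) e t
    by (simp add: mset_permute_list)
qed

lemma Gdist_le:
  assumes "size A = Q" "size B = Q" "mset x = A" "mset y = B"
  shows "Gdist A B \<le> sqrt (\<Sum>i<Q. (norm (x ! i - y ! i))\<^sup>2)"
proof -
  obtain a b \<sigma> where ab: "mset a = A" "mset b = B" "length a = Q" "length b = Q" "\<sigma> permutes {..<Q}"
    "Gdist A B = sqrt (\<Sum>i<Q. (norm (a ! i - b ! \<sigma> i))\<^sup>2)"
    "\<And>\<tau>. \<tau> permutes {..<Q} \<Longrightarrow> sqrt (\<Sum>i<Q. (norm (a ! i - b ! \<tau> i))\<^sup>2) \<ge> Gdist A B"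
    using Gdist_attain[OF assms(1,2)] by blast
  have "mset x = mset a" using assms(3) ab by simp
  then obtain \<pi> where pi: "\<pi> permutes {..<length a}" "permute_list \<pi> a = x"
    by (rule mset_eq_permutation)
  then have pi: "\<pi> permutes {..<Q}" "permute_list \<pi> a = x" using ab by auto
  have "mset y = mset b" using assms(4) ab by simp
  then obtain \<rho> where r: "\<rho> permutes {..<length b}" "permute_list \<rho> b = y"
    by (rule mset_eq_permutation)
  then have r: "\<rho> permutes {..<Q}" "permute_list \<rho> b = y" using ab by auto
  have t: "\<rho> \<circ> inv \<pi> permutes {..<Q}" using r pi by (simp add: permutes_compose permutes_inv)
  have e: "(\<rho> \<circ> inv \<pi>) \<circ> \<pi> = \<rho>" using pi(1) by (simp add: o_assoc[symmetric] permutes_inv_o)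
  show ?thesis
    using pl_sum[OF ab(3,4) pi(1) t] ab(7)[OF t] pi r e by simp
qed

lemma Gdist_nonneg:
  assumes "size A = Q" "size B = Q"
  shows "Gdist A B \<ge> 0"
proof -
  obtain a b \<sigma> where ab: "mset a = A" "mset b = B" "length a = Q" "length b = Q" "\<sigma> permutes {..<Q}"
    "Gdist A B = sqrt (\<Sum>i<Q. (norm (a ! i - b ! \<sigma> i))\<^sup>2)"
    "\<And>\<tau>. \<tau> permutes {..<Q} \<Longrightarrow> sqrt (\<Sum>i<Q. (norm (a ! i - b ! \<tau> i))\<^sup>2) \<ge> Gdist A B"
    using Gdist_attain[OF assms] by blast
  show ?thesis using ab(6) by (simp add: sum_nonneg)
qed

lemma pt_id:
  fixes a b p :: "'a::real_inner"
  shows "(norm (p - ((1-t) *\<^sub>R a + t *\<^sub>R b)))\<^sup>2 = (1-t)*(norm(p-a))\<^sup>2 + t*(norm(p-b))\<^sup>2 - t*(1-t)*(norm(a-b))\<^sup>2"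
  by (simp add: power2_norm_eq_inner inner_diff_left inner_diff_right inner_add_left inner_add_right inner_commute algebra_simps)


lemma sq_sqrt_eq:
  assumes "sqrt X = y" "X \<ge> 0" shows "X = y\<^sup>2"
  using assms by auto

theorem theorem3p2:
  fixes A B C :: "(real^'n) multiset" and Q :: nat and \<gamma> :: "real \<Rightarrow> (real^'n) multiset" and t :: real
  assumes "A \<in> Qpoints Q" "B \<in> Qpoints Q" "C \<in> Qpoints Q"
    and "is_geodesic Q \<gamma> A B"
    and "t \<in> {0..1}"
  shows "(Gdist (\<gamma> t) C)\<^sup>2 \<ge> (1 - t) * (Gdist A C)\<^sup>2 + t * (Gdist B C)\<^sup>2 - t * (1 - t) * (Gdist A B)\<^sup>2"
proof -
  define P where "P = \<gamma> t"
  define d where "d = Gdist A B"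
  have sA: "size A = Q" and sB: "size B = Q" and sC: "size C = Q"
    using assms(1-3) by (auto simp: Qpoints_def)
  have t0: "0 \<le> t" and t1: "t \<le> 1" using assms(5) by auto
  have geo: "\<gamma> 0 = A" "\<gamma> 1 = B" "\<And>s u. s \<in> {0..1} \<Longrightarrow> u \<in> {0..1} \<Longrightarrow> Gdist (\<gamma> s) (\<gamma> u) = \<bar>u - s\<bar> * d"
    "\<And>s. s \<in> {0..1} \<Longrightarrow> \<gamma> s \<in> Qpoints Q"
    using assms(4) unfolding is_geodesic_def d_def by auto
  have sP: "size P = Q" using geo(4)[OF assms(5)] by (simp add: P_def Qpoints_def)
  have GAP: "Gdist A P = t * d" using geo(3)[of 0 t] geo(1) assms(5) t0 by (simp add: P_def)
  have GPB: "Gdist P B = (1 - t) * d" using geo(3)[of t 1] geo(2) assms(5) t1 by (simp add: P_def)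
  have d0: "d \<ge> 0" unfolding d_def using Gdist_nonneg[OF sA sB] .
  obtain p where mp: "mset p = P" using ex_mset by blast
  obtain c where mc: "mset c = C" and GPC: "Gdist P C = sqrt (\<Sum>i<Q. (norm (p ! i - c ! i))\<^sup>2)"
    using Gdist_left[OF sP sC mp] by blast
  obtain a where ma: "mset a = A" and GAP': "Gdist A P = sqrt (\<Sum>i<Q. (norm (a ! i - p ! i))\<^sup>2)"
    using Gdist_right[OF sA sP mp] by blast
  obtain b where mb: "mset b = B" and GPB': "Gdist P B = sqrt (\<Sum>i<Q. (norm (p ! i - b ! i))\<^sup>2)"
    using Gdist_left[OF sP sB mp] by blast
  define S where "S = (\<Sum>i<Q. (norm (a ! i - b ! i))\<^sup>2)"
  define SA where "SA = (\<Sum>i<Q. (norm (a ! i - c ! i))\<^sup>2)"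
  define SB where "SB = (\<Sum>i<Q. (norm (b ! i - c ! i))\<^sup>2)"
  have eAP: "(\<Sum>i<Q. (norm (a ! i - p ! i))\<^sup>2) = (t * d)\<^sup>2"
    by (rule sq_sqrt_eq) (use GAP GAP' in \<open>auto intro: sum_nonneg\<close>)
  have ePB: "(\<Sum>i<Q. (norm (p ! i - b ! i))\<^sup>2) = ((1 - t) * d)\<^sup>2"
    by (rule sq_sqrt_eq) (use GPB GPB' in \<open>auto intro: sum_nonneg\<close>)
  have ePC: "(Gdist P C)\<^sup>2 = (\<Sum>i<Q. (norm (p ! i - c ! i))\<^sup>2)"
    using GPC by (simp add: sum_nonneg)
  have dS: "d\<^sup>2 \<le> S"
  proof -
    have "d \<le> sqrt S" unfolding d_def S_def by (rule Gdist_le[OF sA sB ma mb])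
    then have "d\<^sup>2 \<le> (sqrt S)\<^sup>2" using d0 by (simp add: power_mono)
    then show ?thesis by (simp add: S_def sum_nonneg)
  qed
  have GAC: "(Gdist A C)\<^sup>2 \<le> SA"
  proof -
    have "Gdist A C \<le> sqrt SA" unfolding SA_def by (rule Gdist_le[OF sA sC ma mc])
    then have "(Gdist A C)\<^sup>2 \<le> (sqrt SA)\<^sup>2" using Gdist_nonneg[OF sA sC] by (simp add: power_mono)
    then show ?thesis by (simp add: SA_def sum_nonneg)
  qed
  have GBC: "(Gdist B C)\<^sup>2 \<le> SB"
  proof -
    have "Gdist B C \<le> sqrt SB" unfolding SB_def by (rule Gdist_le[OF sB sC mb mc])
    then have "(Gdist B C)\<^sup>2 \<le> (sqrt SB)\<^sup>2" using Gdist_nonneg[OF sB sC] by (simp add: power_mono)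
    then show ?thesis by (simp add: SB_def sum_nonneg)
  qed
  define m where "m i = (1 - t) *\<^sub>R a ! i + t *\<^sub>R b ! i" for i
  have "(\<Sum>i<Q. (norm (p ! i - m i))\<^sup>2) = (\<Sum>i<Q. (1-t)*(norm(p ! i - a ! i))\<^sup>2 + t*(norm(p ! i - b ! i))\<^sup>2 - t*(1-t)*(norm(a ! i - b ! i))\<^sup>2)"
    unfolding m_def by (simp add: pt_id)
  also have "\<dots> = (1-t) * (\<Sum>i<Q. (norm (a ! i - p ! i))\<^sup>2) + t * (\<Sum>i<Q. (norm (p ! i - b ! i))\<^sup>2) - t*(1-t)*S"
    by (simp add: S_def sum.distrib sum_subtractf sum_distrib_left norm_minus_commute)
  also have "\<dots> \<le> 0"
  proof -
    have "t*(1-t)*d\<^sup>2 \<le> t*(1-t)*S" using dS t0 t1 by (simp add: mult_left_mono)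
    moreover have "(1-t) * (t * d)\<^sup>2 + t * ((1 - t) * d)\<^sup>2 = t*(1-t)*d\<^sup>2"
      by (simp add: power2_eq_square algebra_simps)
    ultimately show ?thesis unfolding eAP ePB by linarith
  qed
  finally have le0: "(\<Sum>i<Q. (norm (p ! i - m i))\<^sup>2) \<le> 0" .
  have "(\<Sum>i<Q. (norm (p ! i - m i))\<^sup>2) \<ge> 0" by (intro sum_nonneg) simp
  with le0 have "(\<Sum>i<Q. (norm (p ! i - m i))\<^sup>2) = 0" by linarith
  then have pm: "\<And>i. i < Q \<Longrightarrow> p ! i = m i"
    by (simp add: sum_nonneg_eq_0_iff)
  have tS: "t * (1 - t) * S = t * (1 - t) * d\<^sup>2"
  proof (cases "t = 0")
    case False
    have "(\<Sum>i<Q. (norm (a ! i - p ! i))\<^sup>2) = (\<Sum>i<Q. t\<^sup>2 * (norm (a ! i - b ! i))\<^sup>2)"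
    proof (intro sum.cong refl)
      fix i assume "i \<in> {..<Q}"
      then have "a ! i - p ! i = t *\<^sub>R (a ! i - b ! i)" using pm[of i] by (simp add: m_def algebra_simps)
      then show "(norm (a ! i - p ! i))\<^sup>2 = t\<^sup>2 * (norm (a ! i - b ! i))\<^sup>2"
        by (simp add: power_mult_distrib)
    qed
    then have "t\<^sup>2 * S = t\<^sup>2 * d\<^sup>2" using eAP by (simp add: S_def sum_distrib_left power_mult_distrib)
    then have "S = d\<^sup>2" using False by simp
    then show ?thesis by simp
  qed simp
  have "(Gdist P C)\<^sup>2 = (\<Sum>i<Q. (1-t)*(norm(a ! i - c ! i))\<^sup>2 + t*(norm(b ! i - c ! i))\<^sup>2 - t*(1-t)*(norm(a ! i - b ! i))\<^sup>2)"
    unfolding ePC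
  proof (intro sum.cong refl)
    fix i assume "i \<in> {..<Q}"
    then show "(norm (p ! i - c ! i))\<^sup>2 = (1-t)*(norm(a ! i - c ! i))\<^sup>2 + t*(norm(b ! i - c ! i))\<^sup>2 - t*(1-t)*(norm(a ! i - b ! i))\<^sup>2"
      using pm[of i] pt_id[of "c ! i" t "a ! i" "b ! i"] by (simp add: m_def norm_minus_commute)
  qed
  also have "\<dots> = (1-t) * SA + t * SB - t*(1-t)*S"
    by (simp add: SA_def SB_def S_def sum.distrib sum_subtractf sum_distrib_left)
  also have "\<dots> \<ge> (1 - t) * (Gdist A C)\<^sup>2 + t * (Gdist B C)\<^sup>2 - t * (1 - t) * d\<^sup>2"
  proof -
    have "(1-t) * (Gdist A C)\<^sup>2 \<le> (1-t) * SA" using GAC t1 by (intro mult_left_mono) auto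
    moreover have "t * (Gdist B C)\<^sup>2 \<le> t * SB" using GBC t0 by (intro mult_left_mono) auto
    ultimately show ?thesis using tS by linarith
  qed
  finally show ?thesis by (simp add: P_def d_def)
qed

end
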